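(* Consider a cellular network with $n$ base stations $\mathcal{N}=\{1,\dots,n\}$, base station $i$ serving a nonempty set $\mathcal{J}_i$ of users (pairwise disjoint), channel gains $g_{kj}>0$ and noise power $\sigma^2>0$. Let a load vector $\mathbf{x}>\mathbf{0}$ and a rate vector $\mathbf{r}>\mathbf{0}$ be given. For $\mathbf{p}\in\mathbb{R}^n_+$ and each $i$, let $h_i(\bar{\mathbf{p}}_i;\mathbf{x},\mathbf{r})$ be the unique $p_i>0$ satisfying $$1=\sum_{j\in\mathcal{J}_i}\frac{r_{ij}/x_i}{\log\Big(1+p_i\,\frac{g_{ij}}{\sum_{k\ne i}p_kg_{kj}x_k+\sigma^2}\Big)},$$ and let $\mathbf{h}(\mathbf{p};\mathbf{x},\mathbf{r})=(h_1(\bar{\mathbf{p}}_1;\mathbf{x},\mathbf{r}),\dots,h_n(\bar{\mathbf{p}}_n;\mathbf{x},\mathbf{r}))^T$. Then $\mathbf{p}\mapsto\mathbf{h}(\mathbf{p};\mathbf{x},\mathbf{r})$ is a standard interference function.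
   Context: $\log$ is natural logarithm; vector inequalities are componentwise; $\bar{\mathbf{p}}_i$ denotes $\mathbf{p}$ with its $i$th component removed. A function $\mathbf{I}:\mathbb{R}^n_+\to\mathbb{R}^n_+$ is a standard interference function if for all $\mathbf{p}\ge\mathbf{0}$: (positivity) $\mathbf{I}(\mathbf{p})>\mathbf{0}$; (monotonicity) $\mathbf{p}\ge\mathbf{p}'$ implies $\mathbf{I}(\mathbf{p})\ge\mathbf{I}(\mathbf{p}')$; (scalability) for every $\alpha>1$, $\alpha\mathbf{I}(\mathbf{p})>\mathbf{I}(\alpha\mathbf{p})$. *)

theory Defs
  imports Complex_Main
begin

definition nonneg_vec :: "('n \<Rightarrow> real) \<Rightarrow> bool" where
  "nonneg_vec p \<longleftrightarrow> (\<forall>i. 0 \<le> p i)"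

definition standard_interference :: "(('n \<Rightarrow> real) \<Rightarrow> ('n \<Rightarrow> real)) \<Rightarrow> bool" where
  "standard_interference I \<longleftrightarrow>
     (\<forall>p. nonneg_vec p \<longrightarrow> (\<forall>i. I p i > 0)) \<and>
     (\<forall>p p'. nonneg_vec p \<and> nonneg_vec p' \<and> (\<forall>i. p' i \<le> p i) \<longrightarrow> (\<forall>i. I p' i \<le> I p i)) \<and>
     (\<forall>p \<alpha>. nonneg_vec p \<and> \<alpha> > 1 \<longrightarrow> (\<forall>i. \<alpha> * I p i > I (\<lambda>k. \<alpha> * p k) i))"

definition interf :: "('n::finite \<Rightarrow> 'u \<Rightarrow> real) \<Rightarrow> real \<Rightarrow> ('n \<Rightarrow> real) \<Rightarrow> ('n \<Rightarrow> real) \<Rightarrow> 'n \<Rightarrow> 'u \<Rightarrow> real" where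
  "interf g \<sigma>2 x p i j = (\<Sum>k\<in>UNIV - {i}. p k * g k j * x k) + \<sigma>2"

definition h_fun :: "('n::finite \<Rightarrow> 'u set) \<Rightarrow> ('n \<Rightarrow> 'u \<Rightarrow> real) \<Rightarrow> real
     \<Rightarrow> ('n \<Rightarrow> real) \<Rightarrow> ('n \<Rightarrow> 'u \<Rightarrow> real) \<Rightarrow> ('n \<Rightarrow> real) \<Rightarrow> ('n \<Rightarrow> real)" where
  "h_fun J g \<sigma>2 x r p = (\<lambda>i. THE q. q > 0 \<and>
      1 = (\<Sum>j\<in>J i. (r i j / x i) / ln (1 + q * (g i j / interf g \<sigma>2 x p i j))))"

end

theory Submission
  imports Defs
begin

definition FF :: "'u set \<Rightarrow> ('u\<Rightarrow>real) \<Rightarrow> ('u\<Rightarrow>real) \<Rightarrow> real \<Rightarrow> real" where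
  "FF A c a q = (\<Sum>j\<in>A. c j / ln (1 + q * a j))"

lemma term_mono:
  fixes c u v :: real
  assumes "c > 0" "0 < u" "u \<le> v"
  shows "c / ln (1 + v) \<le> c / ln (1 + u)"
proof -
  have "0 < ln (1+u)" by (rule ln_gt_zero) (use assms in simp)
  moreover have "ln (1+u) \<le> ln (1+v)" using assms by simp
  ultimately show ?thesis using assms by (simp add: frac_le)
qed

lemma term_smono:
  fixes c u v :: real
  assumes "c > 0" "0 < u" "u < v"
  shows "c / ln (1 + v) < c / ln (1 + u)"
proof -
  have "0 < ln (1+u)" by (rule ln_gt_zero) (use assms in simp)
  moreover have "ln (1+u) < ln (1+v)" using assms by simp
  ultimately show ?thesis using assms by (simp add: divide_strict_left_mono)
qed

lemma FF_smono_q: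
  assumes "finite A" "A \<noteq> {}" "\<And>j. j\<in>A \<Longrightarrow> c j > 0 \<and> a j > 0" "0 < q1" "q1 < q2"
  shows "FF A c a q2 < FF A c a q1"
  unfolding FF_def
proof (rule sum_strict_mono[OF assms(1,2)])
  fix j assume "j \<in> A"
  with assms show "c j / ln (1 + q2 * a j) < c j / ln (1 + q1 * a j)"
    by (intro term_smono) auto
qed

lemma FF_mono_a:
  assumes "\<And>j. j\<in>A \<Longrightarrow> c j > 0 \<and> a j > 0 \<and> a j \<le> a' j" "0 < q"
  shows "FF A c a' q \<le> FF A c a q"
  unfolding FF_def
proof (rule sum_mono)
  fix j assume "j \<in> A"
  with assms show "c j / ln (1 + q * a' j) \<le> c j / ln (1 + q * a j)"
    by (intro term_mono) (auto intro: mult_left_mono)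
qed

lemma FF_smono_a:
  assumes "finite A" "A \<noteq> {}" "\<And>j. j\<in>A \<Longrightarrow> c j > 0 \<and> a j > 0 \<and> a j < a' j" "0 < q"
  shows "FF A c a' q < FF A c a q"
  unfolding FF_def
proof (rule sum_strict_mono[OF assms(1,2)])
  fix j assume "j \<in> A"
  with assms show "c j / ln (1 + q * a' j) < c j / ln (1 + q * a j)"
    by (intro term_smono) auto
qed

lemma FF_exists:
  assumes "finite A" "A \<noteq> {}" "\<And>j. j\<in>A \<Longrightarrow> c j > 0 \<and> a j > 0"
  shows "\<exists>q. q > 0 \<and> FF A c a q = 1"
proof -
  obtain j0 where j0: "j0 \<in> A" using assms(2) by blast
  define N where "N = real (card A)"
  have N: "N \<ge> 1" using assms(1,2) unfolding N_def
    by (simp add: Suc_leI card_gt_0_iff)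
  define ql where "ql = (exp (c j0) - 1) / a j0"
  define qh where "qh = (\<Sum>j\<in>A. exp (N * c j) / a j)"
  have cj0: "c j0 > 0" "a j0 > 0" using assms(3) j0 by auto
  have qlpos: "ql > 0" unfolding ql_def using cj0 by simp
  have each: "exp (N * c j) / a j \<le> qh" if "j \<in> A" for j
    unfolding qh_def using assms that
    by (intro member_le_sum) (auto intro: divide_nonneg_pos less_imp_le)
  have "ql \<le> exp (N * c j0) / a j0" unfolding ql_def
  proof (intro divide_right_mono)
    have "c j0 \<le> N * c j0" using cj0 N by (simp add: mult_le_cancel_right1)
    hence e: "exp (c j0) \<le> exp (N * c j0)" by simp
    show "exp (c j0) - 1 \<le> exp (N * c j0)" using e by linarith
  qed (use cj0 in auto)
  with each[OF j0] have qlh: "ql \<le> qh" by linarith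
  have Fl: "FF A c a ql \<ge> 1"
  proof -
    have "c j0 / ln (1 + ql * a j0) = 1" unfolding ql_def using cj0 by simp
    moreover have "c j0 / ln (1 + ql * a j0) \<le> FF A c a ql"
      unfolding FF_def
    proof (intro member_le_sum)
      fix j assume "j \<in> A - {j0}"
      hence "c j > 0" "a j > 0" using assms(3) by auto
      hence "ln (1 + ql * a j) > 0" using qlpos by (intro ln_gt_zero) simp
      thus "0 \<le> c j / ln (1 + ql * a j)" using \<open>c j > 0\<close> by simp
    qed (use j0 assms in auto)
    ultimately show ?thesis by simp
  qed
  have Fh: "FF A c a qh \<le> 1"
  proof -
    have "FF A c a qh \<le> (\<Sum>j\<in>A. 1 / N)"
      unfolding FF_def
    proof (rule sum_mono)
      fix j assume j: "j \<in> A"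
      have cj: "c j > 0" "a j > 0" using assms(3) j by auto
      have "exp (N * c j) \<le> qh * a j" using each[OF j] cj by (simp add: field_simps)
      have "N * c j \<le> ln (1 + qh * a j)"
      proof -
        have p: "0 < exp (N * c j)" by simp
        have "exp (N * c j) \<le> 1 + qh * a j" using \<open>exp (N * c j) \<le> qh * a j\<close> by linarith
        hence "ln (exp (N * c j)) \<le> ln (1 + qh * a j)" using p by (subst ln_le_cancel_iff) (use p in linarith)+
        thus ?thesis by simp
      qed
      moreover have "N * c j > 0" using N cj by simp
      ultimately have "c j / ln (1 + qh * a j) \<le> c j / (N * c j)"
        using cj by (intro frac_le) auto
      also have "\<dots> = 1 / N" using cj by simp
      finally show "c j / ln (1 + qh * a j) \<le> 1 / N" .
    qed
    also have "\<dots> = 1" using N unfolding N_def by simp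
    finally show ?thesis .
  qed
  have cont: "continuous_on {ql..qh} (FF A c a)"
    unfolding FF_def
  proof (intro continuous_on_sum continuous_on_divide continuous_on_ln continuous_intros ballI)
    fix j x assume j: "j \<in> A" and x: "x \<in> {ql..qh}"
    have "x > 0" using x qlpos by auto
    with assms(3)[OF j] have "x * a j > 0" by simp
    thus "1 + x * a j \<noteq> 0" by auto
  next
    fix j x assume j: "j \<in> A" and x: "x \<in> {ql..qh}"
    have "x > 0" using x qlpos by auto
    with assms(3)[OF j] have "x * a j > 0" by simp
    show "ln (1 + x * a j) \<noteq> 0" using \<open>x * a j > 0\<close> by (smt (verit) ln_gt_zero)
  qed
  from IVT2'[of "FF A c a" qh 1 ql, OF Fh Fl qlh cont] obtain q where
    "ql \<le> q" "FF A c a q = 1" by blast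
  thus ?thesis using qlpos by (intro exI[of _ q]) linarith
qed

lemma FF_unique:
  assumes "finite A" "A \<noteq> {}" "\<And>j. j\<in>A \<Longrightarrow> c j > 0 \<and> a j > 0"
  shows "\<exists>!q. q > 0 \<and> 1 = FF A c a q"
proof -
  obtain q where q: "q > 0" "FF A c a q = 1" using FF_exists[of A c a] assms by blast
  show ?thesis
  proof (rule ex1I[of _ q])
    show "q > 0 \<and> 1 = FF A c a q" using q by simp
    fix y assume y: "y > 0 \<and> 1 = FF A c a y"
    show "y = q"
    proof (rule ccontr)
      assume "y \<noteq> q"
      hence "y < q \<or> q < y" by auto
      thus False using FF_smono_q[of A c a y q] FF_smono_q[of A c a q y] assms q y by auto
    qed
  qed
qed

lemma ratio_lt:
  fixes g S s al :: real
  assumes "g > 0" "S \<ge> 0" "s > 0" "al > 1"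
  shows "g / (S + s) < al * g / (al * S + s)"
proof -
  have d1: "S + s > 0" "al * S + s > 0" using assms by (auto intro: add_nonneg_pos)
  have "g * s < al * (g * s)" using assms by simp
  hence "g * (al * S + s) < al * g * (S + s)" by (simp add: algebra_simps)
  thus ?thesis using d1 by (simp add: divide_less_eq less_divide_eq mult.commute)
qed

theorem lemma5:
  fixes J :: "'n::finite \<Rightarrow> 'u set"
    and g :: "'n \<Rightarrow> 'u \<Rightarrow> real"
    and \<sigma>2 :: real
    and x :: "'n \<Rightarrow> real"
    and r :: "'n \<Rightarrow> 'u \<Rightarrow> real"
  assumes J_fin: "\<And>i. finite (J i)"
    and J_ne: "\<And>i. J i \<noteq> {}"
    and J_disj: "\<And>i i'. i \<noteq> i' \<Longrightarrow> J i \<inter> J i' = {}"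
    and g_pos: "\<And>k j. g k j > 0"
    and \<sigma>_pos: "\<sigma>2 > 0"
    and x_pos: "\<And>i. x i > 0"
    and r_pos: "\<And>i j. j \<in> J i \<Longrightarrow> r i j > 0"
  shows "standard_interference (h_fun J g \<sigma>2 x r)"
proof -
  define S where "S p i j = (\<Sum>k\<in>UNIV - {i}. p k * g k j * x k)" for p i j
  define a where "a p i j = g i j / interf g \<sigma>2 x p i j" for p i j
  define c where "c i j = r i j / x i" for i j
  define h where "h = h_fun J g \<sigma>2 x r"
  have interf_S: "interf g \<sigma>2 x p i j = S p i j + \<sigma>2" for p i j
    unfolding interf_def S_def by simp
  have S_nn: "S p i j \<ge> 0" if "nonneg_vec p" for p i j
    unfolding S_def
  proof (intro sum_nonneg)
    fix k
    have "0 \<le> p k" using that by (simp add: nonneg_vec_def)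
    moreover have "0 \<le> g k j" "0 \<le> x k" using g_pos[of k j] x_pos[of k] by auto
    ultimately show "0 \<le> p k * g k j * x k" by simp
  qed
  have a_pos: "a p i j > 0" if "nonneg_vec p" for p i j
    unfolding a_def interf_S using S_nn[OF that, of i j] g_pos[of i j] \<sigma>_pos by simp
  have c_pos: "j \<in> J i \<Longrightarrow> c i j > 0" for i j
    unfolding c_def using r_pos x_pos by simp
  have h_eq: "h p i = (THE q. q > 0 \<and> 1 = FF (J i) (c i) (a p i) q)" for p i
    unfolding h_def h_fun_def FF_def a_def c_def by simp
  have h_prop: "h p i > 0 \<and> 1 = FF (J i) (c i) (a p i) (h p i)" if "nonneg_vec p" for p i
  proof -
    have "\<exists>!q. q > 0 \<and> 1 = FF (J i) (c i) (a p i) q"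
      using J_fin J_ne c_pos a_pos[OF that] by (intro FF_unique) auto
    from theI'[OF this] show ?thesis unfolding h_eq .
  qed
  have pos: "\<forall>p. nonneg_vec p \<longrightarrow> (\<forall>i. h p i > 0)" using h_prop by blast
  have mono: "h p' i \<le> h p i" if p: "nonneg_vec p" and p': "nonneg_vec p'" and le: "\<forall>i. p' i \<le> p i" for p p' i
  proof (rule ccontr)
    assume "\<not> h p' i \<le> h p i"
    hence lt: "h p i < h p' i" by simp
    have Sle: "S p' i j \<le> S p i j" for j
      unfolding S_def using le g_pos x_pos
      by (intro sum_mono) (auto intro: mult_right_mono less_imp_le)
    have ale: "a p i j \<le> a p' i j" for j
      unfolding a_def interf_S using Sle[of j] S_nn[OF p', of i j] \<sigma>_pos g_pos[of i j]
      by (intro divide_left_mono) (auto intro: less_imp_le mult_pos_pos add_nonneg_pos)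
    have "FF (J i) (c i) (a p' i) (h p i) \<le> FF (J i) (c i) (a p i) (h p i)"
      using c_pos a_pos[OF p] ale h_prop[OF p] by (intro FF_mono_a) auto
    moreover have "FF (J i) (c i) (a p' i) (h p' i) < FF (J i) (c i) (a p' i) (h p i)"
      using J_fin J_ne c_pos a_pos[OF p'] h_prop[OF p] lt by (intro FF_smono_q) auto
    ultimately show False using h_prop[OF p, of i] h_prop[OF p', of i] by linarith
  qed
  have scal: "al * h p i > h (\<lambda>k. al * p k) i" if p: "nonneg_vec p" and al: "al > 1" for p al i
  proof (rule ccontr)
    define p2 where "p2 = (\<lambda>k. al * p k)"
    have p2: "nonneg_vec p2" using p al unfolding p2_def nonneg_vec_def by simp
    assume "\<not> al * h p i > h (\<lambda>k. al * p k) i"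
    hence ge: "al * h p i \<le> h p2 i" unfolding p2_def by simp
    have S2: "S p2 i j = al * S p i j" for j
      unfolding S_def p2_def by (simp add: sum_distrib_left algebra_simps)
    have alt: "a p i j < al * a p2 i j" for j
      unfolding a_def interf_S S2 using ratio_lt[OF g_pos S_nn[OF p] \<sigma>_pos al] by simp
    have eq: "FF (J i) (c i) (a p2 i) (al * h p i) = FF (J i) (c i) (\<lambda>j. al * a p2 i j) (h p i)"
      unfolding FF_def by (simp add: algebra_simps)
    have "FF (J i) (c i) (\<lambda>j. al * a p2 i j) (h p i) < FF (J i) (c i) (a p i) (h p i)"
      using J_fin J_ne c_pos a_pos[OF p] alt h_prop[OF p] by (intro FF_smono_a) auto
    hence lt1: "FF (J i) (c i) (a p2 i) (al * h p i) < 1" using eq h_prop[OF p, of i] by linarith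
    have hp0: "al * h p i > 0" using h_prop[OF p] al by simp
    show False
    proof (cases "al * h p i = h p2 i")
      case True thus False using lt1 h_prop[OF p2, of i] by simp
    next
      case False
      hence "al * h p i < h p2 i" using ge by simp
      hence "FF (J i) (c i) (a p2 i) (h p2 i) < FF (J i) (c i) (a p2 i) (al * h p i)"
        using J_fin J_ne c_pos a_pos[OF p2] hp0 by (intro FF_smono_q) auto
      thus False using lt1 h_prop[OF p2, of i] by linarith
    qed
  qed
  show ?thesis unfolding standard_interference_def h_def[symmetric]
    using pos mono scal by blast
qed

end
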